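(* In a synchronized communication system of $n$ robots, let $IR$ be its isolation-resilience and let $SN$ be the maximum possible number of starving robots in the system. Then $SN+IR=n-1$.
   Context: Model. A system consists of pairwise disjoint unit circles $C_1,\dots,C_n$ in the plane (trajectories) and a communication range $r>0$. Its communication graph $G$ has vertex set $\{C_1,\dots,C_n\}$, $C_i,C_j$ adjacent iff the distance between their centres is at most $2+r$. Positions on a circle are angles (mod $2\pi$). For an edge $(i,j)$, the link position $\phi_{ij}$ is the angle of the point of $C_i$ closest to $C_j$. A schedule $F=(f,g)$ assigns each circle a starting angle $f(C_i)$ and direction $g(C_i)\in\{1,-1\}$; a robot following it on $C_i$ is at $f(C_i)+g(C_i)2\pi t$ at time $t$. $F$ is a synchronization schedule if $g(C_i)=-g(C_j)$ for adjacent circles and robots following $F$ on adjacent $C_i,C_j$ are at $\phi_{ij},\phi_{ji}$ at exactly the same times. A synchronized communication system (SCS) consists of $n$ robots, initially one per circle, following a synchronization schedule, with the switching rule: when a robot on $C_i$ reaches $\phi_{ij}$ and $C_j$ is empty, it instantly passes to $C_j$ and follows the schedule of $C_j$; if $C_j$ has a robot, they meet and each stays on its circle. A partial SCS arises by letting some robots leave (possibly at different times); remaining robots never leave. A surviving robot $u$ starves if every time $u$ arrives at a link position $\phi_{ij}$ of its current circle $C_i$, the circle $C_j$ is empty; the system is in starvation state if all surviving robots starve. The isolation-resilience is the largest $k$ such that, whichever $k$ robots leave, the system does not fall into starvation state. The maximum possible number of starving robots is taken over all partial SCSs obtained from the given SCS by letting robots leave. *)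

theory Defs
  imports "HOL-Analysis.Analysis"
begin

text \<open>Circles C_0,...,C_(n-1) are unit circles with centres c i (complex plane).
  Robots are numbered 0..n-1; robot u starts on circle u.
  Angles are reals; two angles denote the same position iff their cis agree (mod 2 pi).\<close>

definition valid_system :: "nat \<Rightarrow> (nat \<Rightarrow> complex) \<Rightarrow> real \<Rightarrow> bool" where
  "valid_system n c r \<longleftrightarrow> r > 0 \<and> (\<forall>i<n. \<forall>j<n. i \<noteq> j \<longrightarrow> dist (c i) (c j) > 2)"

definition adj :: "(nat \<Rightarrow> complex) \<Rightarrow> real \<Rightarrow> nat \<Rightarrow> nat \<Rightarrow> bool" where
  "adj c r i j \<longleftrightarrow> i \<noteq> j \<and> dist (c i) (c j) \<le> 2 + r"

text \<open>Link position phi_ij: angle of the point of C_i closest to C_j.\<close>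
definition link_pos :: "(nat \<Rightarrow> complex) \<Rightarrow> nat \<Rightarrow> nat \<Rightarrow> real" where
  "link_pos c i j = Arg (c j - c i)"

definition robot_pos :: "(nat \<Rightarrow> real) \<Rightarrow> (nat \<Rightarrow> int) \<Rightarrow> nat \<Rightarrow> real \<Rightarrow> real" where
  "robot_pos f g i t = f i + of_int (g i) * 2 * pi * t"

definition at_link :: "(nat \<Rightarrow> complex) \<Rightarrow> (nat \<Rightarrow> real) \<Rightarrow> (nat \<Rightarrow> int) \<Rightarrow> nat \<Rightarrow> nat \<Rightarrow> real \<Rightarrow> bool" where
  "at_link c f g i j t \<longleftrightarrow> cis (robot_pos f g i t) = cis (link_pos c i j)"

definition is_sync_schedule ::
  "nat \<Rightarrow> (nat \<Rightarrow> complex) \<Rightarrow> real \<Rightarrow> (nat \<Rightarrow> real) \<Rightarrow> (nat \<Rightarrow> int) \<Rightarrow> bool" where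
  "is_sync_schedule n c r f g \<longleftrightarrow>
     (\<forall>i<n. g i = 1 \<or> g i = -1) \<and>
     (\<forall>i<n. \<forall>j<n. adj c r i j \<longrightarrow>
         g i = - g j \<and> (\<forall>t. at_link c f g i j t \<longleftrightarrow> at_link c f g j i t))"

definition event_times ::
  "nat \<Rightarrow> (nat \<Rightarrow> complex) \<Rightarrow> real \<Rightarrow> (nat \<Rightarrow> real) \<Rightarrow> (nat \<Rightarrow> int) \<Rightarrow> real set" where
  "event_times n c r f g = {t. 0 \<le> t \<and> (\<exists>i<n. \<exists>j<n. adj c r i j \<and> at_link c f g i j t)}"

text \<open>Configuration: robot \<mapsto> circle it is on (None = robot has left / absent).\<close>
type_synonym config = "nat \<Rightarrow> nat option"

definition occupied :: "config \<Rightarrow> nat \<Rightarrow> bool" where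
  "occupied \<sigma> j \<longleftrightarrow> (\<exists>u. \<sigma> u = Some j)"

definition move ::
  "nat \<Rightarrow> (nat \<Rightarrow> complex) \<Rightarrow> real \<Rightarrow> (nat \<Rightarrow> real) \<Rightarrow> (nat \<Rightarrow> int) \<Rightarrow> real \<Rightarrow> config \<Rightarrow> config" where
  "move n c r f g t \<sigma> = (\<lambda>u. case \<sigma> u of
      None \<Rightarrow> None
    | Some i \<Rightarrow>
        if (\<exists>j<n. adj c r i j \<and> at_link c f g i j t \<and> \<not> occupied \<sigma> j)
        then Some (THE j. j < n \<and> adj c r i j \<and> at_link c f g i j t \<and> \<not> occupied \<sigma> j)
        else Some i)"

text \<open>Departures: robots in L leave at time tau u (they take part in no event at a time \<ge> tau u).\<close>
definition alive :: "nat set \<Rightarrow> (nat \<Rightarrow> real) \<Rightarrow> nat \<Rightarrow> real \<Rightarrow> bool" where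
  "alive L \<tau> u t \<longleftrightarrow> u \<notin> L \<or> t < \<tau> u"

definition kill :: "nat set \<Rightarrow> (nat \<Rightarrow> real) \<Rightarrow> real \<Rightarrow> config \<Rightarrow> config" where
  "kill L \<tau> t \<sigma> = (\<lambda>u. if alive L \<tau> u t then \<sigma> u else None)"

definition init_config :: "nat \<Rightarrow> config" where
  "init_config n = (\<lambda>u. if u < n then Some u else None)"

definition state_before ::
  "nat \<Rightarrow> (nat \<Rightarrow> complex) \<Rightarrow> real \<Rightarrow> (nat \<Rightarrow> real) \<Rightarrow> (nat \<Rightarrow> int) \<Rightarrow>
   nat set \<Rightarrow> (nat \<Rightarrow> real) \<Rightarrow> real \<Rightarrow> config" where
  "state_before n c r f g L \<tau> t =
     foldl (\<lambda>\<sigma> s. move n c r f g s (kill L \<tau> s \<sigma>)) (init_config n)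
       (sorted_list_of_set {s \<in> event_times n c r f g. s < t})"

definition pre_state ::
  "nat \<Rightarrow> (nat \<Rightarrow> complex) \<Rightarrow> real \<Rightarrow> (nat \<Rightarrow> real) \<Rightarrow> (nat \<Rightarrow> int) \<Rightarrow>
   nat set \<Rightarrow> (nat \<Rightarrow> real) \<Rightarrow> real \<Rightarrow> config" where
  "pre_state n c r f g L \<tau> t = kill L \<tau> t (state_before n c r f g L \<tau> t)"

definition starves_at ::
  "nat \<Rightarrow> (nat \<Rightarrow> complex) \<Rightarrow> real \<Rightarrow> (nat \<Rightarrow> real) \<Rightarrow> (nat \<Rightarrow> int) \<Rightarrow>
   nat set \<Rightarrow> (nat \<Rightarrow> real) \<Rightarrow> nat \<Rightarrow> real \<Rightarrow> bool" where
  "starves_at n c r f g L \<tau> u t \<longleftrightarrow>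
     (\<forall>i j. pre_state n c r f g L \<tau> t u = Some i \<longrightarrow> j < n \<longrightarrow> adj c r i j \<longrightarrow>
        at_link c f g i j t \<longrightarrow> \<not> occupied (pre_state n c r f g L \<tau> t) j)"

definition starves_from ::
  "nat \<Rightarrow> (nat \<Rightarrow> complex) \<Rightarrow> real \<Rightarrow> (nat \<Rightarrow> real) \<Rightarrow> (nat \<Rightarrow> int) \<Rightarrow>
   nat set \<Rightarrow> (nat \<Rightarrow> real) \<Rightarrow> real \<Rightarrow> nat \<Rightarrow> bool" where
  "starves_from n c r f g L \<tau> T u \<longleftrightarrow>
     (\<forall>t \<in> event_times n c r f g. T \<le> t \<longrightarrow> starves_at n c r f g L \<tau> u t)"

definition surviving :: "nat \<Rightarrow> nat set \<Rightarrow> nat \<Rightarrow> bool" where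
  "surviving n L u \<longleftrightarrow> u < n \<and> u \<notin> L"

definition leave_schedule :: "nat \<Rightarrow> nat set \<Rightarrow> (nat \<Rightarrow> real) \<Rightarrow> bool" where
  "leave_schedule n L \<tau> \<longleftrightarrow> L \<subseteq> {..<n} \<and> (\<forall>u\<in>L. 0 \<le> \<tau> u)"

definition after_departures :: "nat set \<Rightarrow> (nat \<Rightarrow> real) \<Rightarrow> real \<Rightarrow> bool" where
  "after_departures L \<tau> T \<longleftrightarrow> (\<forall>u\<in>L. \<tau> u \<le> T)"

definition num_starving ::
  "nat \<Rightarrow> (nat \<Rightarrow> complex) \<Rightarrow> real \<Rightarrow> (nat \<Rightarrow> real) \<Rightarrow> (nat \<Rightarrow> int) \<Rightarrow>
   nat set \<Rightarrow> (nat \<Rightarrow> real) \<Rightarrow> real \<Rightarrow> nat" where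
  "num_starving n c r f g L \<tau> T = card {u. surviving n L u \<and> starves_from n c r f g L \<tau> T u}"

definition starvation_state ::
  "nat \<Rightarrow> (nat \<Rightarrow> complex) \<Rightarrow> real \<Rightarrow> (nat \<Rightarrow> real) \<Rightarrow> (nat \<Rightarrow> int) \<Rightarrow>
   nat set \<Rightarrow> (nat \<Rightarrow> real) \<Rightarrow> real \<Rightarrow> bool" where
  "starvation_state n c r f g L \<tau> T \<longleftrightarrow>
     (\<forall>u. surviving n L u \<longrightarrow> starves_from n c r f g L \<tau> T u)"

definition falls_into_starvation ::
  "nat \<Rightarrow> (nat \<Rightarrow> complex) \<Rightarrow> real \<Rightarrow> (nat \<Rightarrow> real) \<Rightarrow> (nat \<Rightarrow> int) \<Rightarrow>
   nat set \<Rightarrow> (nat \<Rightarrow> real) \<Rightarrow> bool" where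
  "falls_into_starvation n c r f g L \<tau> \<longleftrightarrow>
     (\<exists>T. after_departures L \<tau> T \<and> starvation_state n c r f g L \<tau> T)"

definition max_starving ::
  "nat \<Rightarrow> (nat \<Rightarrow> complex) \<Rightarrow> real \<Rightarrow> (nat \<Rightarrow> real) \<Rightarrow> (nat \<Rightarrow> int) \<Rightarrow> nat" where
  "max_starving n c r f g =
     Max {num_starving n c r f g L \<tau> T | L \<tau> T. leave_schedule n L \<tau> \<and> after_departures L \<tau> T}"

definition isolation_resilience ::
  "nat \<Rightarrow> (nat \<Rightarrow> complex) \<Rightarrow> real \<Rightarrow> (nat \<Rightarrow> real) \<Rightarrow> (nat \<Rightarrow> int) \<Rightarrow> nat" where
  "isolation_resilience n c r f g =
     Max {k. k \<le> n \<and> (\<forall>L \<tau>. leave_schedule n L \<tau> \<and> card L = k \<longrightarrow>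
                              \<not> falls_into_starvation n c r f g L \<tau>)}"

end

theory Submission imports Defs begin

lemma sl_ins: assumes "finite A" "\<forall>a\<in>A. a < b" shows "sorted_list_of_set (insert (b::real) A) = sorted_list_of_set A @ [b]"
proof -
  have "b \<notin> A" using assms by auto
  have s: "sorted_wrt (<) (sorted_list_of_set A)" using assms by simp
  show ?thesis
    apply (subst sorted_list_of_set_unique[symmetric])
    using assms \<open>b \<notin> A\<close> s by (auto simp: sorted_wrt_append)
qed

lemma none_foldl_gen:
  assumes "\<forall>u\<ge>n. \<sigma> u = None"
  shows "\<forall>u\<ge>n. foldl (\<lambda>\<sigma> s. move n c r f g s (kill L \<tau> s \<sigma>)) \<sigma> xs u = None"
  using assms
proof (induction xs arbitrary: \<sigma>)
  case Nil then show ?case by simp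
next
  case (Cons x xs)
  have "\<forall>u\<ge>n. move n c r f g x (kill L \<tau> x \<sigma>) u = None"
    using Cons.prems by (simp add: move_def kill_def)
  then show ?case using Cons.IH by simp
qed

lemma none_state_before: "u \<ge> n \<Longrightarrow> state_before n c r f g L \<tau> t u = None"
  unfolding state_before_def
  using none_foldl_gen[of n "init_config n"] by (simp add: init_config_def)

lemma inv_main:
  fixes n :: nat and c :: "nat \<Rightarrow> complex" and r :: real
    and f :: "nat \<Rightarrow> real" and g :: "nat \<Rightarrow> int"
  assumes ls: "leave_schedule n L \<tau>" and ad: "after_departures L \<tau> T"
    and S'sub: "S' \<subseteq> {u. surviving n L u \<and> starves_from n c r f g L \<tau> T u}"
    and TT: "T \<le> T'"
    and L'def: "L' = {..<n} - S'" and \<tau>'def: "\<tau>' = (\<lambda>u. if u \<in> L then \<tau> u else T')"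
    and fin: "finite A"
  defines "E \<equiv> event_times n c r f g"
  shows "A \<subseteq> E \<longrightarrow> (\<forall>a\<in>A. \<forall>s\<in>E. s < a \<longrightarrow> s \<in> A) \<longrightarrow>
    (\<forall>u. u \<notin> L' \<longrightarrow> foldl (\<lambda>\<sigma> s. move n c r f g s (kill L' \<tau>' s \<sigma>)) (init_config n) (sorted_list_of_set A) u
                    = foldl (\<lambda>\<sigma> s. move n c r f g s (kill L \<tau> s \<sigma>)) (init_config n) (sorted_list_of_set A) u) \<and>
    ((\<forall>a\<in>A. a < T') \<longrightarrow> foldl (\<lambda>\<sigma> s. move n c r f g s (kill L' \<tau>' s \<sigma>)) (init_config n) (sorted_list_of_set A)
                    = foldl (\<lambda>\<sigma> s. move n c r f g s (kill L \<tau> s \<sigma>)) (init_config n) (sorted_list_of_set A))"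
  using fin
proof (induction A rule: finite_linorder_max_induct)
  case empty then show ?case by simp
next
  case (insert b A)
  have Lsub: "L \<subseteq> {..<n}" using ls by (simp add: leave_schedule_def)
  have S'L: "\<forall>u\<in>S'. u < n \<and> u \<notin> L" using S'sub by (auto simp: surviving_def)
  have notL': "\<And>v. v \<notin> L' \<Longrightarrow> v \<notin> L" using Lsub S'L L'def by auto
  have inL': "\<And>v. v \<in> L \<Longrightarrow> v \<in> L'" using notL' by blast
  show ?case
  proof (intro impI)
    assume AE: "insert b A \<subseteq> E" and dc: "\<forall>a\<in>insert b A. \<forall>s\<in>E. s < a \<longrightarrow> s \<in> insert b A"
    have dcA: "\<forall>a\<in>A. \<forall>s\<in>E. s < a \<longrightarrow> s \<in> A"
      using dc insert.hyps(2) by fastforce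
    have Aeq: "A = {s \<in> E. s < b}"
      using dc AE insert.hyps(2) by auto
    define \<sigma> where "\<sigma> = foldl (\<lambda>\<sigma> s. move n c r f g s (kill L \<tau> s \<sigma>)) (init_config n) (sorted_list_of_set A)"
    define \<sigma>' where "\<sigma>' = foldl (\<lambda>\<sigma> s. move n c r f g s (kill L' \<tau>' s \<sigma>)) (init_config n) (sorted_list_of_set A)"
    have IH1: "\<forall>u. u \<notin> L' \<longrightarrow> \<sigma>' u = \<sigma> u" and IH2: "(\<forall>a\<in>A. a < T') \<longrightarrow> \<sigma>' = \<sigma>"
      using insert.IH AE dcA unfolding \<sigma>_def \<sigma>'_def by auto
    have sb: "\<sigma> = state_before n c r f g L \<tau> b"
      unfolding \<sigma>_def state_before_def  E_def[symmetric] Aeq[symmetric] ..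
    have sl: "sorted_list_of_set (insert b A) = sorted_list_of_set A @ [b]"
      using sl_ins insert.hyps by blast
    have goal_eq: "foldl (\<lambda>\<sigma> s. move n c r f g s (kill L' \<tau>' s \<sigma>)) (init_config n) (sorted_list_of_set (insert b A)) = move n c r f g b (kill L' \<tau>' b \<sigma>')"
       "foldl (\<lambda>\<sigma> s. move n c r f g s (kill L \<tau> s \<sigma>)) (init_config n) (sorted_list_of_set (insert b A)) = move n c r f g b (kill L \<tau> b \<sigma>)"
      unfolding sl \<sigma>_def \<sigma>'_def by simp_all
    show "(\<forall>u. u \<notin> L' \<longrightarrow> foldl (\<lambda>\<sigma> s. move n c r f g s (kill L' \<tau>' s \<sigma>)) (init_config n) (sorted_list_of_set (insert b A)) u =
             foldl (\<lambda>\<sigma> s. move n c r f g s (kill L \<tau> s \<sigma>)) (init_config n) (sorted_list_of_set (insert b A)) u) \<and>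
          ((\<forall>a\<in>insert b A. a < T') \<longrightarrow> foldl (\<lambda>\<sigma> s. move n c r f g s (kill L' \<tau>' s \<sigma>)) (init_config n) (sorted_list_of_set (insert b A)) =
             foldl (\<lambda>\<sigma> s. move n c r f g s (kill L \<tau> s \<sigma>)) (init_config n) (sorted_list_of_set (insert b A)))"
    proof (cases "b < T'")
      case True
      have "kill L' \<tau>' b = kill L \<tau> b"
        using True ad TT inL' unfolding \<tau>'def
        by (auto simp: kill_def alive_def after_departures_def intro!: ext)
      moreover have "\<sigma>' = \<sigma>" using IH2 True insert.hyps(2) by auto
      ultimately show ?thesis by (simp add: goal_eq)
    next
      case False
      have bT: "T' \<le> b" using False by simp
      define K where "K = kill L \<tau> b \<sigma>"
      define K' where "K' = kill L' \<tau>' b \<sigma>'"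
      have K'L': "\<And>v. v \<in> L' \<Longrightarrow> K' v = None"
        using bT unfolding K'_def \<tau>'def kill_def alive_def
        using ad TT by (auto simp: after_departures_def)
      have KK: "\<And>v. v \<notin> L' \<Longrightarrow> K' v = K v"
        using IH1 notL' unfolding K'_def K_def kill_def alive_def by auto
      have occ: "\<And>j. occupied K' j \<Longrightarrow> occupied K j"
        unfolding occupied_def using K'L' KK by (metis option.distinct(1))
      have bE: "b \<in> E" using AE by auto
      have step: "move n c r f g b K' u = move n c r f g b K u" if u: "u \<notin> L'" for u
      proof (cases "u < n")
        case False
        then have "K u = None" using none_state_before[of n u] sb unfolding K_def kill_def by auto
        then show ?thesis using KK[OF u] by (simp add: move_def)
      next
        case True
        then have uS: "u \<in> S'" using u L'def by auto
        then have st: "starves_from n c r f g L \<tau> T u" using S'sub by auto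
        then have sa: "starves_at n c r f g L \<tau> u b"
          using bE bT TT unfolding starves_from_def E_def by auto
        have pre: "pre_state n c r f g L \<tau> b = K" unfolding pre_state_def K_def sb ..
        show ?thesis
        proof (cases "K u")
          case None then show ?thesis using KK[OF u] by (simp add: move_def)
        next
          case (Some i)
          have nocc: "\<And>j. j < n \<Longrightarrow> adj c r i j \<Longrightarrow> at_link c f g i j b \<Longrightarrow> \<not> occupied K j"
            using sa Some pre unfolding starves_at_def by auto
          have eqP: "\<And>j. (j < n \<and> adj c r i j \<and> at_link c f g i j b \<and> \<not> occupied K' j) =
                         (j < n \<and> adj c r i j \<and> at_link c f g i j b \<and> \<not> occupied K j)"
            using nocc occ by blast
          show ?thesis using Some KK[OF u] by (auto simp add: move_def eqP)
        qed
      qed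
      have "\<not> (\<forall>a\<in>insert b A. a < T')" using False by auto
      then show ?thesis using step False unfolding K_def K'_def by (simp add: goal_eq)
    qed
  qed
qed

lemma state_agree:
  fixes n :: nat and c :: "nat \<Rightarrow> complex" and r :: real
    and f :: "nat \<Rightarrow> real" and g :: "nat \<Rightarrow> int"
  assumes ls: "leave_schedule n L \<tau>" and ad: "after_departures L \<tau> T"
    and S'sub: "S' \<subseteq> {u. surviving n L u \<and> starves_from n c r f g L \<tau> T u}"
    and TT: "T \<le> T'"
    and L'def: "L' = {..<n} - S'" and \<tau>'def: "\<tau>' = (\<lambda>u. if u \<in> L then \<tau> u else T')"
    and u: "u \<notin> L'"
  shows "state_before n c r f g L' \<tau>' t u = state_before n c r f g L \<tau> t u"
proof (cases "finite {s \<in> event_times n c r f g. s < t}")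
  case True
  show ?thesis
    using inv_main[OF ls ad S'sub TT L'def \<tau>'def True] u
    unfolding state_before_def by auto
next
  case False
  then show ?thesis unfolding state_before_def by simp
qed

lemma mono_starve:
  fixes n :: nat and c :: "nat \<Rightarrow> complex" and r :: real
    and f :: "nat \<Rightarrow> real" and g :: "nat \<Rightarrow> int"
  assumes ls: "leave_schedule n L \<tau>" and ad: "after_departures L \<tau> T"
    and S'sub: "S' \<subseteq> {u. surviving n L u \<and> starves_from n c r f g L \<tau> T u}"
    and TT: "T \<le> T'" and T0: "0 \<le> T'"
    and L'def: "L' = {..<n} - S'" and \<tau>'def: "\<tau>' = (\<lambda>u. if u \<in> L then \<tau> u else T')"
  shows "leave_schedule n L' \<tau>' \<and> after_departures L' \<tau>' T' \<and>
         starvation_state n c r f g L' \<tau>' T'"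
proof (intro conjI)
  have Lsub: "L \<subseteq> {..<n}" using ls by (simp add: leave_schedule_def)
  have S'L: "\<forall>u\<in>S'. u < n \<and> u \<notin> L" using S'sub by (auto simp: surviving_def)
  have notL': "\<And>v. v \<notin> L' \<Longrightarrow> v \<notin> L" using Lsub S'L L'def by auto
  show "leave_schedule n L' \<tau>'"
    using ls T0 L'def \<tau>'def unfolding leave_schedule_def by auto
  show "after_departures L' \<tau>' T'"
    using ad TT \<tau>'def unfolding after_departures_def by auto
  show "starvation_state n c r f g L' \<tau>' T'"
    unfolding starvation_state_def starves_from_def
  proof (intro allI impI ballI)
    fix u t
    assume su: "surviving n L' u" and tE: "t \<in> event_times n c r f g" and tT: "T' \<le> t"
    have uS: "u \<in> S'" using su L'def by (auto simp: surviving_def)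
    then have sa: "starves_at n c r f g L \<tau> u t"
      using S'sub tE tT TT unfolding starves_from_def by auto
    define K where "K = pre_state n c r f g L \<tau> t"
    define K' where "K' = pre_state n c r f g L' \<tau>' t"
    have K'L': "\<And>v. v \<in> L' \<Longrightarrow> K' v = None"
      using tT unfolding K'_def pre_state_def \<tau>'def kill_def alive_def
      using ad TT by (auto simp: after_departures_def)
    have KK: "\<And>v. v \<notin> L' \<Longrightarrow> K' v = K v"
      using state_agree[OF ls ad S'sub TT L'def \<tau>'def] notL'
      unfolding K'_def K_def pre_state_def kill_def alive_def by auto
    have occ: "\<And>j. occupied K' j \<Longrightarrow> occupied K j"
      unfolding occupied_def using K'L' KK by (metis option.distinct(1))
    have uL': "u \<notin> L'" using uS L'def by auto
    show "starves_at n c r f g L' \<tau>' u t"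
      using sa occ KK[OF uL'] unfolding starves_at_def K_def[symmetric] K'_def[symmetric]
      by metis
  qed
qed

lemma full_state: "state_before n c r f g {} \<tau> t = init_config n"
proof -
  have step: "move n c r f g s (kill {} \<tau> s (init_config n)) = init_config n" for s
  proof -
    have k: "kill {} \<tau> s (init_config n) = init_config n"
      by (simp add: kill_def alive_def)
    have occ: "\<And>j. j < n \<Longrightarrow> occupied (init_config n) j"
      unfolding occupied_def init_config_def by (metis)
    show ?thesis unfolding k
    proof (rule ext)
      fix u
      have iu: "init_config n u = (if u < n then Some u else None)" by (simp add: init_config_def)
        show "move n c r f g s (init_config n) u = init_config n u"
        by (cases "u < n") (auto simp add: move_def occ iu)
    qed
  qed
  have "foldl (\<lambda>\<sigma> s. move n c r f g s (kill {} \<tau> s \<sigma>)) (init_config n) xs = init_config n" for xs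
    by (induction xs) (auto simp: step)
  then show ?thesis unfolding state_before_def by blast
qed

lemma event_exists:
  fixes g :: "nat \<Rightarrow> int"
  assumes "g i = 1 \<or> g i = -1"
  shows "\<exists>t. T \<le> t \<and> 0 \<le> t \<and> at_link c f g i j t"
proof -
  define d where "d = (link_pos c i j - f i) / (2 * pi)"
  define m :: nat where "m = nat \<lceil>\<bar>T\<bar> + \<bar>d\<bar>\<rceil>"
  define t where "t = of_int (g i) * d + real m"
  have gg: "of_int (g i) * of_int (g i) = (1::real)" using assms by auto
  have m1: "\<bar>T\<bar> + \<bar>d\<bar> \<le> real m" unfolding m_def by linarith
  have gd: "\<bar>of_int (g i) * d\<bar> = \<bar>d\<bar>" using assms by auto
  have tT: "T \<le> t" "0 \<le> t" unfolding t_def using m1 gd by linarith+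
  define k :: int where "k = g i * int m"
  have rp: "robot_pos f g i t = link_pos c i j + 2 * pi * of_int k"
  proof -
    have pd: "2 * pi * d = link_pos c i j - f i" unfolding d_def by simp
    have "of_int (g i) * 2 * pi * t = (of_int (g i) * of_int (g i)) * (2 * pi * d) + 2 * pi * (of_int (g i) * real m)"
      unfolding t_def by (simp add: algebra_simps)
    also have "\<dots> = link_pos c i j - f i + 2 * pi * of_int k"
      using gg pd unfolding k_def by simp
    finally show ?thesis unfolding robot_pos_def by simp
  qed
  have ck: "cis (2 * pi * of_int k) = 1"
    by (rule cis_multiple_2pi) simp
  have "cis (robot_pos f g i t) = cis (link_pos c i j) * cis (2 * pi * of_int k)"
    by (simp only: rp cis_mult)
  then have "cis (robot_pos f g i t) = cis (link_pos c i j)" using ck by simp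
  then show ?thesis using tT unfolding at_link_def by auto
qed

theorem lemma15:
  fixes n :: nat and c :: "nat \<Rightarrow> complex" and r :: real
    and f :: "nat \<Rightarrow> real" and g :: "nat \<Rightarrow> int"
  assumes "valid_system n c r"
    and "is_sync_schedule n c r f g"
    and "\<exists>i<n. \<exists>j<n. adj c r i j"
    and "\<forall>i<n. \<forall>j<n. \<forall>k<n. adj c r i j \<and> adj c r i k \<and> j \<noteq> k \<longrightarrow>
           cis (link_pos c i j) \<noteq> cis (link_pos c i k)"
  shows "max_starving n c r f g + isolation_resilience n c r f g = n - 1"
proof -
  obtain i j where ij: "i < n" "j < n" "adj c r i j" using assms(3) by blast
  have gi: "g i = 1 \<or> g i = -1" using assms(2) ij unfolding is_sync_schedule_def by auto
  have nfull: "\<not> starves_from n c r f g {} \<tau> T i" for \<tau> T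
  proof
    assume st: "starves_from n c r f g {} \<tau> T i"
    obtain t where t: "T \<le> t" "0 \<le> t" "at_link c f g i j t" using event_exists[of g i T c f j, OF gi] by blast
    have tE: "t \<in> event_times n c r f g" using t ij unfolding event_times_def by auto
    have ps: "pre_state n c r f g {} \<tau> t = init_config n"
      unfolding pre_state_def full_state by (simp add: kill_def alive_def)
    have "starves_at n c r f g {} \<tau> i t" using st tE t unfolding starves_from_def by auto
    moreover have "occupied (init_config n) j" unfolding occupied_def init_config_def using ij by auto
    ultimately show False using ij t unfolding starves_at_def ps by (auto simp: init_config_def)
  qed
  define M where "M = {num_starving n c r f g L \<tau> T | L \<tau> T. leave_schedule n L \<tau> \<and> after_departures L \<tau> T}"
  have card_le: "num_starving n c r f g L \<tau> T \<le> n" for L \<tau> T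
  proof -
    have "{u. surviving n L u \<and> starves_from n c r f g L \<tau> T u} \<subseteq> {..<n}" by (auto simp: surviving_def)
    from card_mono[OF _ this] show ?thesis unfolding num_starving_def by simp
  qed
  have "M \<subseteq> {..n}" using card_le unfolding M_def by blast
  then have finM: "finite M" using finite_subset by blast
  have "num_starving n c r f g {} (\<lambda>_. 0) 0 \<in> M"
    unfolding M_def leave_schedule_def after_departures_def by blast
  then have neM: "M \<noteq> {}" by blast
  define SN where "SN = Max M"
  have SNdef: "max_starving n c r f g = SN" unfolding SN_def M_def max_starving_def ..
  have SNin: "SN \<in> M" unfolding SN_def using finM neM by simp
  have SNge: "x \<in> M \<Longrightarrow> x \<le> SN" for x unfolding SN_def using finM by simp
  obtain L0 \<tau>0 T0 where L0: "leave_schedule n L0 \<tau>0" "after_departures L0 \<tau>0 T0"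
    "num_starving n c r f g L0 \<tau>0 T0 = SN" using SNin unfolding M_def by auto
  define S0 where "S0 = {u. surviving n L0 u \<and> starves_from n c r f g L0 \<tau>0 T0 u}"
  have cS0: "card S0 = SN" using L0(3) unfolding S0_def num_starving_def by simp
  have SNle: "SN \<le> n - 1"
  proof -
    obtain x where x: "x < n" "x \<notin> S0"
    proof (cases "L0 = {}")
      case True
      then show ?thesis using that[of i] ij nfull unfolding S0_def by auto
    next
      case False
      then obtain x where "x \<in> L0" by auto
      then show ?thesis using that[of x] L0(1) unfolding S0_def leave_schedule_def surviving_def by auto
    qed
    have "S0 \<subseteq> {..<n} - {x}" using x unfolding S0_def surviving_def by auto
    from card_mono[OF _ this] x show ?thesis using cS0 by simp
  qed
  define G where "G = {k. k \<le> n \<and> (\<forall>L \<tau>. leave_schedule n L \<tau> \<and> card L = k \<longrightarrow>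
                              \<not> falls_into_starvation n c r f g L \<tau>)}"
  have IRdef: "isolation_resilience n c r f g = Max G" unfolding G_def isolation_resilience_def ..
  have bad: "k \<notin> G" if k: "n - SN \<le> k" for k
  proof
    assume kG: "k \<in> G"
    then have kn: "k \<le> n" unfolding G_def by auto
    have "n - k \<le> card S0" using cS0 k by simp
    then obtain S' where S': "S' \<subseteq> S0" "card S' = n - k" "finite S'"
      by (rule obtain_subset_with_card_n)
    define L' where "L' = {..<n} - S'"
    define T' where "T' = max T0 0"
    define \<tau>' where "\<tau>' = (\<lambda>u. if u \<in> L0 then \<tau>0 u else T')"
    have S'n: "S' \<subseteq> {..<n}" using S' unfolding S0_def surviving_def by auto
    have cL': "card L' = k" unfolding L'_def using S'n S' kn by (simp add: card_Diff_subset)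
    have ms: "leave_schedule n L' \<tau>' \<and> after_departures L' \<tau>' T' \<and>
         starvation_state n c r f g L' \<tau>' T'"
    proof -
      have S'sub: "S' \<subseteq> {u. surviving n L0 u \<and> starves_from n c r f g L0 \<tau>0 T0 u}"
        using S'(1) unfolding S0_def .
      have "T0 \<le> T'" "0 \<le> T'" unfolding T'_def by simp_all
      from mono_starve[OF L0(1) L0(2) S'sub this L'_def \<tau>'_def] show ?thesis .
    qed
    then have "falls_into_starvation n c r f g L' \<tau>'" unfolding falls_into_starvation_def by auto
    then show False using kG ms cL' unfolding G_def by auto
  qed
  have good: "k \<in> G" if k: "k \<le> n - 1 - SN" for k
    unfolding G_def
  proof (intro CollectI conjI allI impI)
    show "k \<le> n" using k by simp
    fix L \<tau>
    assume a: "leave_schedule n L \<tau> \<and> card L = k"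
    show "\<not> falls_into_starvation n c r f g L \<tau>"
    proof
      assume "falls_into_starvation n c r f g L \<tau>"
      then obtain T where T: "after_departures L \<tau> T" "starvation_state n c r f g L \<tau> T"
        unfolding falls_into_starvation_def by auto
      have "{u. surviving n L u \<and> starves_from n c r f g L \<tau> T u} = {..<n} - L"
        using T(2) unfolding starvation_state_def surviving_def by auto
      then have "num_starving n c r f g L \<tau> T = n - k"
      proof -
        have Ls: "L \<subseteq> {..<n}" using a unfolding leave_schedule_def by simp
        then have "finite L" using finite_subset by blast
        then show ?thesis using Ls a \<open>_ = {..<n} - L\<close> unfolding num_starving_def by (simp add: card_Diff_subset)
      qed
      moreover have "num_starving n c r f g L \<tau> T \<in> M" unfolding M_def using a T by auto
      ultimately have "n - k \<le> SN" using SNge by simp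
      then show False using k SNle ij by linarith
    qed
  qed
  have "Max G = n - 1 - SN"
  proof (rule Max_eqI)
    have "G \<subseteq> {..n}" unfolding G_def by blast
    then show "finite G" using finite_subset by blast
    show "y \<le> n - 1 - SN" if "y \<in> G" for y
    proof -
      have "\<not> n - SN \<le> y" using bad[of y] that by blast
      then show ?thesis by linarith
    qed
    show "n - 1 - SN \<in> G" by (rule good) simp
  qed
  then show ?thesis unfolding SNdef IRdef using SNle by simp
qed

end
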